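(* Let $0<\alpha<\beta<\tfrac12$. For all $g\in C_b^1(M)$, the upper box-counting dimension of the attractor satisfies $\overline D_B(A_g)\le D_L$.
   Context: $M=[0,1)\times\mathbb R$. $B_\alpha(x,y)=(2x,\alpha y)$ if $0\le x<\tfrac12$ and $(2x-1,\alpha y+1-\alpha)$ if $\tfrac12\le x<1$; likewise $B_\beta$. $C_b^1(M)$: $C^1$ functions on the interior of $M$ with bounded function and derivative, extended continuously to the closure. $B_g(x,y,z,w)=(B_\alpha(x,y),B_\beta(z,w)+(0,g(x,y)))$. $A_\alpha$ is the Cantor set with $A_\alpha=\alpha A_\alpha\cup(\alpha A_\alpha+1-\alpha)$ (similarly $A_\beta$), $A=[0,1)\times A_\alpha\times[0,1)\times A_\beta$, and the attractor of $B_g$ is $A_g=h_g(A)$ where $h_g(x,y,z,w)=\big(x,y,z,w+\sum_{i\ge0}\beta^i g(B_\alpha^{-i-1}(x,y))\big)$, $B_\alpha^{-1}(x,y)=(x/2,y/\alpha)$ if $y\le\tfrac12$, $((x+1)/2,(y-(1-\alpha))/\alpha)$ if $y>\tfrac12$. $\overline D_B(S)=\limsup_{\varepsilon\to0}\frac{\log N(S,\varepsilon)}{-\log\varepsilon}$, $N(S,\varepsilon)$ the least number of $\varepsilon$-balls covering $S$. $D_L=2-2\frac{\log2}{\log\beta}$ if $\beta\le\tfrac14$ and $D_L=3-2\frac{\log2}{\log\alpha}-\frac{\log\beta}{\log\alpha}$ if $\beta\ge\tfrac14$. *)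

theory Defs
  imports "HOL-Analysis.Analysis"
begin

definition M_strip :: "(real \<times> real) set" where
  "M_strip = {0..<1} \<times> UNIV"

definition baker :: "real \<Rightarrow> real \<times> real \<Rightarrow> real \<times> real" where
  "baker a p = (if fst p < 1/2 then (2 * fst p, a * snd p)
                else (2 * fst p - 1, a * snd p + 1 - a))"

definition baker_inv :: "real \<Rightarrow> real \<times> real \<Rightarrow> real \<times> real" where
  "baker_inv a p = (if snd p \<le> 1/2 then (fst p / 2, snd p / a)
                    else ((fst p + 1) / 2, (snd p - (1 - a)) / a))"

definition skew_baker :: "real \<Rightarrow> real \<Rightarrow> (real \<times> real \<Rightarrow> real)
    \<Rightarrow> real \<times> real \<times> real \<times> real \<Rightarrow> real \<times> real \<times> real \<times> real" where
  "skew_baker a b g q = (case q of (x, y, z, w) \<Rightarrow>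
     (let (x', y') = baker a (x, y); (z', w') = baker b (z, w)
      in (x', y', z', w' + g (x, y))))"

definition Cb1 :: "(real \<times> real \<Rightarrow> real) set" where
  "Cb1 = {g. (\<exists>g' :: (real \<times> real) \<Rightarrow> ((real \<times> real) \<Rightarrow>\<^sub>L real).
               (\<forall>p \<in> {0<..<1} \<times> UNIV. (g has_derivative blinfun_apply (g' p)) (at p))
             \<and> continuous_on ({0<..<1} \<times> UNIV) g'
             \<and> bounded (g' ` ({0<..<1} \<times> UNIV)))
           \<and> bounded (g ` M_strip)
           \<and> (\<exists>G. continuous_on ({0..1} \<times> UNIV) G \<and> (\<forall>p \<in> M_strip. G p = g p))}"

text \<open>The Cantor set A_a = a A_a \<union> (a A_a + 1 - a) (the attractor of this IFS),
  given explicitly as the set of its points.\<close>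
definition cantor :: "real \<Rightarrow> real set" where
  "cantor a = {(1 - a) * (\<Sum>i. a ^ i * (if d i then 1 else 0)) | d :: nat \<Rightarrow> bool. True}"

definition base_set :: "real \<Rightarrow> real \<Rightarrow> (real \<times> real \<times> real \<times> real) set" where
  "base_set a b = {0..<1} \<times> cantor a \<times> {0..<1} \<times> cantor b"

definition conj_h :: "real \<Rightarrow> real \<Rightarrow> (real \<times> real \<Rightarrow> real)
    \<Rightarrow> real \<times> real \<times> real \<times> real \<Rightarrow> real \<times> real \<times> real \<times> real" where
  "conj_h a b g q = (case q of (x, y, z, w) \<Rightarrow>
     (x, y, z, w + (\<Sum>i. b ^ i * g ((baker_inv a ^^ (i + 1)) (x, y)))))"

definition attractor :: "real \<Rightarrow> real \<Rightarrow> (real \<times> real \<Rightarrow> real)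
    \<Rightarrow> (real \<times> real \<times> real \<times> real) set" where
  "attractor a b g = conj_h a b g ` base_set a b"

definition cover_num :: "'a::metric_space set \<Rightarrow> real \<Rightarrow> nat" where
  "cover_num S e = Inf {card F | F. finite F \<and> S \<subseteq> (\<Union>c \<in> F. ball c e)}"

definition upper_box_dim :: "'a::metric_space set \<Rightarrow> ereal" where
  "upper_box_dim S = Limsup (at_right 0) (\<lambda>e. ereal (ln (real (cover_num S e)) / - ln e))"

definition D_L :: "real \<Rightarrow> real \<Rightarrow> real" where
  "D_L a b = (if b \<le> 1/4 then 2 - 2 * ln 2 / ln b
              else 3 - 2 * ln 2 / ln a - ln b / ln a)"

end

theory Submission
  imports Defs "HOL-Real_Asymp.Real_Asymp"
begin


lemma cover_num_le:
  fixes S :: "'a::metric_space set"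
  assumes "finite F" "S \<subseteq> (\<Union>c\<in>F. ball c r)" "r \<le> e"
  shows "cover_num S e \<le> card F"
proof -
  have "S \<subseteq> (\<Union>c\<in>F. ball c e)" using assms(2) subset_ball[OF assms(3)] by blast
  hence "card F \<in> {card F | F. finite F \<and> S \<subseteq> (\<Union>c \<in> F. ball c e)}" using assms(1) by blast
  thus ?thesis unfolding cover_num_def by (rule cInf_lower) (rule bdd_belowI[of _ 0], rule le0)
qed

lemma u_lim:
  fixes b :: real
  assumes "b > 0"
  shows "(\<lambda>n::nat. (lK + ln (real n + 1) + real n * lc) / (a + (real n - 1) * b)) \<longlonglongrightarrow> lc / b"
  using assms by (real_asymp simp: divide_simps)

lemma nat_ceil_ge: "real N \<le> t \<Longrightarrow> N \<le> nat \<lceil>t\<rceil>"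
  by linarith

lemma dim_bound:
  fixes S :: "'a::metric_space set"
  assumes rho: "0<\<rho>" "\<rho><1" and C: "C>0" and K: "K \<ge> 1" and c: "c \<ge> 1"
   and cov: "\<And>n. \<exists>F. finite F \<and> S \<subseteq> (\<Union>x\<in>F. ball x (C*\<rho>^n)) \<and> real (card F) \<le> K*(real n+1)*c^n"
  shows "upper_box_dim S \<le> ereal (ln c / - ln \<rho>)"
proof -
  define b where "b = - ln \<rho>"
  have b: "b > 0" using rho by (simp add: b_def)
  have lr: "ln \<rho> < 0" using rho by simp
  define u where "u n = (ln K + ln (real n + 1) + real n * ln c) / (- ln C + (real n - 1) * b)" for n::nat
  define nn where "nn e = nat \<lceil>ln (e/C) / ln \<rho>\<rceil>" for e
  have ulim: "u \<longlonglongrightarrow> ln c / b" unfolding u_def by (rule u_lim[OF b])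
  have nnev: "eventually (\<lambda>e. N \<le> nn e) (at_right 0)" for N
    unfolding eventually_at_right_field
  proof (intro exI[of _ "C*\<rho>^N"] conjI allI impI)
    show "0 < C*\<rho>^N" using C rho by simp
    fix e :: real assume e: "0<e" "e < C*\<rho>^N"
    have "e/C < \<rho>^N" using e C by (simp add: field_simps)
    hence "ln (e/C) < ln (\<rho>^N)" using e C rho by simp
    hence "ln (e/C) < N * ln \<rho>" using rho by (simp add: ln_realpow)
    hence "N < ln (e/C) / ln \<rho>" using lr by (simp add: field_simps)
    thus "N \<le> nn e" unfolding nn_def by linarith
  qed
  have nnlim: "filterlim nn at_top (at_right 0)"
    using nnev by (simp add: filterlim_at_top)
  have ulim2: "((\<lambda>e. ereal (u (nn e))) \<longlongrightarrow> ereal (ln c / b)) (at_right 0)"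
    using filterlim_compose[OF ulim nnlim] by simp
  define N1 where "N1 = nat \<lceil>ln C / b\<rceil> + 2"
  have ev1: "eventually (\<lambda>e. 0 < e \<and> e < min 1 C) (at_right (0::real))"
    unfolding eventually_at_right_field using C by (intro exI[of _ "min 1 C"]) auto
  have ev: "eventually (\<lambda>e. ereal (ln (real (cover_num S e)) / - ln e) \<le> ereal (u (nn e))) (at_right 0)"
    using ev1 nnev[of N1]
  proof eventually_elim
    case (elim e)
    define n where "n = nn e"
    define t where "t = ln (e/C) / ln \<rho>"
    have e: "0 < e" "e < 1" "e < C" using elim by auto
    have "ln (e/C) < 0" using e C by simp
    hence t0: "t > 0" unfolding t_def using lr by (simp add: divide_neg_neg)
    have nt: "real n \<ge> t" "real n < t + 1" unfolding n_def nn_def t_def[symmetric] using t0 by linarith+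
    have "real n * ln \<rho> \<le> t * ln \<rho>" using nt lr by (simp add: mult_right_mono_neg)
    also have "t * ln \<rho> = ln (e/C)" unfolding t_def using lr by simp
    finally have "ln (\<rho>^n) \<le> ln (e/C)" using rho by (simp add: ln_realpow)
    hence "\<rho>^n \<le> e/C" using rho e C by simp
    hence rad: "C*\<rho>^n \<le> e" using C by (simp add: field_simps)
    obtain F where F: "finite F" "S \<subseteq> (\<Union>x\<in>F. ball x (C*\<rho>^n))" "real (card F) \<le> K*(real n+1)*c^n"
      using cov[of n] by blast
    have Nle: "real (cover_num S e) \<le> K*(real n+1)*c^n"
      using cover_num_le[OF F(1) F(2) rad] F(3) by linarith
    have "(real n - 1) * ln \<rho> > t * ln \<rho>" using nt lr by (intro mult_strict_right_mono_neg) auto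
    hence "(real n - 1) * b < - ln (e/C)" unfolding b_def using lr t_def by simp
    hence D: "- ln C + (real n - 1) * b < - ln e" using e C by (simp add: ln_div)
    have "n \<ge> N1" using elim n_def by simp
    hence "real n - 1 \<ge> ln C / b + 1" unfolding N1_def by linarith
    hence "(real n - 1) * b \<ge> (ln C / b + 1) * b" using b by (simp add: mult_right_mono)
    moreover have "(ln C / b + 1) * b = ln C + b" using b by (simp add: field_simps)
    ultimately have D0: "- ln C + (real n - 1) * b > 0" using b by linarith
    have c1: "1 \<le> c^n" using c by (rule one_le_power)
    have k1: "1 * 1 \<le> K*(real n+1)" by (rule mult_mono) (use K in auto)
    have "1 * 1 \<le> K*(real n+1)*c^n" by (rule mult_mono) (use k1 c1 K in auto)
    hence bpos: "K*(real n+1)*c^n \<ge> 1" by simp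
    have lnN0: "ln (real (cover_num S e)) \<ge> 0"
      by (cases "cover_num S e = 0") auto
    have "ln (real (cover_num S e)) \<le> ln (K*(real n+1)*c^n)"
      using Nle bpos by (cases "cover_num S e = 0") auto
    also have "\<dots> = ln K + ln (real n + 1) + real n * ln c" using K c
      by (simp add: ln_mult ln_realpow)
    finally have num: "ln (real (cover_num S e)) \<le> ln K + ln (real n + 1) + real n * ln c" .
    have "ln (real (cover_num S e)) / - ln e \<le> ln (real (cover_num S e)) / (- ln C + (real n - 1) * b)"
      using D D0 lnN0 by (intro divide_left_mono mult_pos_pos) auto
    also have "\<dots> \<le> u n" unfolding u_def using num D0 by (intro divide_right_mono) auto
    finally show ?case unfolding n_def by simp
  qed
  have "upper_box_dim S \<le> Limsup (at_right 0) (\<lambda>e. ereal (u (nn e)))"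
    unfolding upper_box_dim_def by (rule Limsup_mono[OF ev])
  also have "\<dots> = ereal (ln c / b)"
    by (rule lim_imp_Limsup[OF _ ulim2]) simp
  finally show ?thesis unfolding b_def .
qed



lemma geo_bound:
  fixes f :: "nat \<Rightarrow> real"
  assumes "0 \<le> a" "a < 1" "\<And>i. \<bar>f i\<bar> \<le> M * a^i"
  shows "summable f" "\<bar>suminf f\<bar> \<le> M / (1 - a)"
proof -
  have sg: "summable (\<lambda>i. M * a^i)" using assms by (intro summable_mult summable_geometric) simp
  show sf: "summable f" using assms(3) by (intro summable_comparison_test[OF _ sg]) auto
  have s1: "suminf f \<le> (\<Sum>i. M * a^i)" using assms(3) by (intro suminf_le sf sg) (auto simp: abs_le_iff)
  have "\<And>i. - (M * a^i) \<le> f i" using assms(3) by (metis abs_le_iff minus_le_iff)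
  hence "(\<Sum>i. - (M * a^i)) \<le> suminf f" using sg by (intro suminf_le sf summable_minus) auto
  moreover have "(\<Sum>i. M * a^i) = M / (1 - a)" using assms suminf_mult[OF summable_geometric, of a M] suminf_geometric[of a] by simp
  moreover have "(\<Sum>i. - (M * a^i)) = - (\<Sum>i. M * a^i)" using sg by (rule suminf_minus)
  ultimately show "\<bar>suminf f\<bar> \<le> M / (1 - a)" using s1 by linarith
qed

definition ind :: "bool \<Rightarrow> real" where "ind p = (if p then 1 else 0)"

definition Y :: "real \<Rightarrow> (nat \<Rightarrow> bool) \<Rightarrow> real" where
  "Y a d = (1 - a) * (\<Sum>i. a^i * ind (d i))"

fun Xs :: "real \<Rightarrow> (nat \<Rightarrow> bool) \<Rightarrow> nat \<Rightarrow> real" where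
  "Xs x d 0 = x"
| "Xs x d (Suc k) = (Xs x d k + ind (d k)) / 2"

lemma ind_bounds[simp]: "0 \<le> ind p" "ind p \<le> 1" by (auto simp: ind_def)

lemma Y_summable: "0 \<le> a \<Longrightarrow> a < 1 \<Longrightarrow> summable (\<lambda>i. a^i * ind (d i))"
  by (rule geo_bound(1)[of a _ 1]) (auto simp: ind_def)

lemma Y_bounds:
  assumes "0 \<le> a" "a < 1"
  shows "0 \<le> Y a d" "Y a d \<le> 1"
proof -
  have s: "summable (\<lambda>i. a^i * ind (d i))" using assms by (rule Y_summable)
  have "\<bar>\<Sum>i. a^i * ind (d i)\<bar> \<le> 1 / (1 - a)"
    using assms by (intro geo_bound(2)) (auto simp: ind_def)
  hence "(\<Sum>i. a^i * ind (d i)) \<le> 1 / (1 - a)" by linarith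
  moreover have "0 \<le> (\<Sum>i. a^i * ind (d i))" using s assms by (intro suminf_nonneg) auto
  ultimately have "(1 - a) * (\<Sum>i. a^i * ind (d i)) \<le> (1 - a) * (1 / (1 - a))"
    "0 \<le> (1 - a) * (\<Sum>i. a^i * ind (d i))" using assms by (intro mult_left_mono mult_nonneg_nonneg; simp)+
  thus "0 \<le> Y a d" "Y a d \<le> 1" unfolding Y_def using assms by auto
qed

lemma Y_head:
  assumes "0 \<le> a" "a < 1"
  shows "Y a d = (1 - a) * ind (d 0) + a * Y a (\<lambda>i. d (Suc i))"
proof -
  have s: "summable (\<lambda>i. a^i * ind (d i))" using assms by (rule Y_summable)
  have s2: "summable (\<lambda>i. a^i * ind (d (Suc i)))" using assms by (rule Y_summable)
  have "(\<Sum>i. a^(Suc i) * ind (d (Suc i))) = (\<Sum>i. a^i * ind (d i)) - ind (d 0)"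
    using suminf_split_head[OF s] by simp
  moreover have "(\<Sum>i. a^(Suc i) * ind (d (Suc i))) = a * (\<Sum>i. a^i * ind (d (Suc i)))"
    using suminf_mult[OF s2, of a] by (simp add: mult.assoc)
  ultimately have "(\<Sum>i. a^i * ind (d i)) = ind (d 0) + a * (\<Sum>i. a^i * ind (d (Suc i)))" by simp
  thus ?thesis unfolding Y_def by (simp add: algebra_simps)
qed

lemma baker_inv_Y:
  assumes "0 < a" "a < 1/2"
  shows "baker_inv a (x, Y a d) = ((x + ind (d 0)) / 2, Y a (\<lambda>i. d (Suc i)))"
proof -
  have h: "Y a d = (1 - a) * ind (d 0) + a * Y a (\<lambda>i. d (Suc i))" using assms by (intro Y_head) auto
  have b: "0 \<le> Y a (\<lambda>i. d (Suc i))" "Y a (\<lambda>i. d (Suc i)) \<le> 1" using assms by (intro Y_bounds; simp)+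
  show ?thesis
  proof (cases "d 0")
    case True
    have "a * Y a (\<lambda>i. d (Suc i)) \<ge> 0" using b assms by simp
    hence "\<not> Y a d \<le> 1/2" using h True assms by (simp add: ind_def)
    then show ?thesis unfolding baker_inv_def using h True assms by (simp add: ind_def)
  next
    case False
    have l: "a * Y a (\<lambda>i. d (Suc i)) \<le> a" using mult_left_le[of "Y a (\<lambda>i. d (Suc i))" a] b assms by simp
    have e: "Y a d = a * Y a (\<lambda>i. d (Suc i))" using h False by (simp add: ind_def)
    hence "Y a d \<le> 1/2" using l assms by linarith
    hence "baker_inv a (x, Y a d) = (x/2, Y a d / a)" unfolding baker_inv_def by simp
    then show ?thesis using e False assms by (simp add: ind_def)
  qed
qed

lemma baker_inv_pow:
  assumes "0 < a" "a < 1/2"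
  shows "(baker_inv a ^^ k) (x, Y a d) = (Xs x d k, Y a (\<lambda>i. d (i + k)))"
proof (induction k)
  case 0 then show ?case by simp
next
  case (Suc k)
  show ?case using baker_inv_Y[OF assms, of "Xs x d k" "\<lambda>i. d (i + k)"] Suc by simp
qed

lemma Xs_range: "0 \<le> x \<Longrightarrow> x < 1 \<Longrightarrow> 0 \<le> Xs x d k \<and> Xs x d k < 1"
  by (induction k) (auto simp: ind_def)

lemma Xs_diff: "(\<And>i. i < k \<Longrightarrow> d i = d' i) \<Longrightarrow> Xs x d k - Xs x' d' k = (x - x') / 2^k"
  by (induction k) (auto simp: field_simps)

lemma Y_diff:
  assumes "0 \<le> a" "a < 1" "\<And>i. i < m \<Longrightarrow> d i = d' i"
  shows "\<bar>Y a d - Y a d'\<bar> \<le> a^m"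
proof -
  define f where "f i = a^i * (ind (d i) - ind (d' i))" for i
  have sf: "summable f" unfolding f_def using Y_summable[OF assms(1,2), of d] Y_summable[OF assms(1,2), of d']
    by (simp add: right_diff_distrib summable_diff)
  have "(\<Sum>i. a^i * ind (d i)) - (\<Sum>i. a^i * ind (d' i)) = (\<Sum>i. a^i * ind (d i) - a^i * ind (d' i))"
    using Y_summable[OF assms(1,2), of d] Y_summable[OF assms(1,2), of d'] by (rule suminf_diff)
  hence "Y a d - Y a d' = (1 - a) * suminf f" unfolding Y_def f_def
    by (simp add: right_diff_distrib[symmetric])
  moreover have "suminf f = (\<Sum>i. f (i + m))" using suminf_split_initial_segment[OF sf, of m] assms(3)
    by (simp add: f_def)
  moreover have "\<bar>(\<Sum>i. f (i + m))\<bar> \<le> a^m / (1 - a)"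
    by (rule geo_bound(2)[OF assms(1,2)]) (use assms(1) in \<open>auto simp: f_def ind_def abs_mult power_add\<close>)
  ultimately have "\<bar>Y a d - Y a d'\<bar> \<le> (1 - a) * (a^m / (1 - a))"
    using assms(2) by (simp add: abs_mult mult_left_mono del: times_divide_eq_right)
  thus ?thesis using assms(2) by simp
qed



definition phi :: "real \<Rightarrow> real \<Rightarrow> (real \<times> real \<Rightarrow> real) \<Rightarrow> real \<Rightarrow> real \<Rightarrow> real" where
  "phi a b g x y = (\<Sum>i. b ^ i * g ((baker_inv a ^^ (i + 1)) (x, y)))"

lemma phi_diff:
  assumes a: "0 < a" "a < 1/2" "a \<le> b" "b < 1/2"
    and gb: "\<And>p. p \<in> M_strip \<Longrightarrow> \<bar>g p\<bar> \<le> G0"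
    and lip: "\<And>p q. p \<in> M_strip \<Longrightarrow> q \<in> M_strip \<Longrightarrow> \<bar>g p - g q\<bar> \<le> B * norm (p - q)"
    and B: "B \<ge> 0"
    and x: "0 \<le> x" "x < 1" "0 \<le> x'" "x' < 1"
    and agree: "\<And>i. i < n \<Longrightarrow> d i = d' i"
  shows "\<bar>phi a b g x (Y a d) - phi a b g x' (Y a d')\<bar>
           \<le> real n * (B * \<bar>x - x'\<bar> + B * b^(n-1)) + 2 * G0 * b^n / (1 - b)"
proof -
  define P where "P i = (baker_inv a ^^ (i + 1)) (x, Y a d)" for i
  define P' where "P' i = (baker_inv a ^^ (i + 1)) (x', Y a d')" for i
  have Pe: "P i = (Xs x d (i+1), Y a (\<lambda>j. d (j + (i+1))))" for i
    unfolding P_def using a by (intro baker_inv_pow) auto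
  have Pe': "P' i = (Xs x' d' (i+1), Y a (\<lambda>j. d' (j + (i+1))))" for i
    unfolding P'_def using a by (intro baker_inv_pow) auto
  have PM: "P i \<in> M_strip" "P' i \<in> M_strip" for i
    unfolding Pe Pe' M_strip_def using Xs_range[OF x(1,2), of d "i+1"] Xs_range[OF x(3,4), of d' "i+1"]
    by (auto simp del: Xs.simps)
  have b0: "0 \<le> b" "b < 1" using a by auto
  have G0: "G0 \<ge> 0" using gb[OF PM(1)[of 0]] by linarith
  have "b^i * \<bar>g (P i)\<bar> \<le> b^i * G0" for i using gb[OF PM(1)[of i]] b0 by (intro mult_left_mono) auto
  hence s1: "summable (\<lambda>i. b^i * g (P i))"
    by (intro geo_bound(1)[OF b0, of _ G0]) (use b0 in \<open>auto simp: abs_mult mult.commute\<close>)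
  have "b^i * \<bar>g (P' i)\<bar> \<le> b^i * G0" for i using gb[OF PM(2)[of i]] b0 by (intro mult_left_mono) auto
  hence s2: "summable (\<lambda>i. b^i * g (P' i))"
    by (intro geo_bound(1)[OF b0, of _ G0]) (use b0 in \<open>auto simp: abs_mult mult.commute\<close>)
  define f where "f i = b^i * g (P i) - b^i * g (P' i)" for i
  have sf: "summable f" unfolding f_def using s1 s2 by (rule summable_diff)
  have "phi a b g x (Y a d) - phi a b g x' (Y a d') = suminf f"
    unfolding phi_def f_def P_def[symmetric] P'_def[symmetric] using s1 s2 by (rule suminf_diff)
  also have "\<dots> = (\<Sum>i. f (i + n)) + (\<Sum>i<n. f i)" by (rule suminf_split_initial_segment[OF sf])
  finally have eq: "phi a b g x (Y a d) - phi a b g x' (Y a d') = (\<Sum>i. f (i + n)) + (\<Sum>i<n. f i)" .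
  have tail: "\<bar>\<Sum>i. f (i + n)\<bar> \<le> 2 * G0 * b^n / (1 - b)"
  proof (rule geo_bound(2)[OF b0])
    fix i
    have "\<bar>g (P (i+n)) - g (P' (i+n))\<bar> \<le> 2 * G0" using gb[OF PM(1)[of "i+n"]] gb[OF PM(2)[of "i+n"]]
      by linarith
    hence "b^(i+n) * \<bar>g (P (i+n)) - g (P' (i+n))\<bar> \<le> b^(i+n) * (2 * G0)" using b0 by (intro mult_left_mono) auto
    thus "\<bar>f (i + n)\<bar> \<le> 2 * G0 * b ^ n * b ^ i" unfolding f_def
      using b0 by (simp add: abs_mult right_diff_distrib[symmetric] power_add mult_ac)
  qed
  have head_term: "\<bar>f i\<bar> \<le> B * \<bar>x - x'\<bar> + B * b^(n-1)" if i: "i < n" for i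
  proof -
    have "Xs x d (i+1) - Xs x' d' (i+1) = (x - x') / 2^(i+1)"
      by (rule Xs_diff) (use agree i in auto)
    hence "\<bar>Xs x d (i+1) - Xs x' d' (i+1)\<bar> = \<bar>x - x'\<bar> / 2^(i+1)"
      by (simp only: abs_divide power_abs abs_numeral)
    also have "\<bar>x - x'\<bar> / 2^(i+1) \<le> \<bar>x - x'\<bar> / 1"
      by (rule divide_left_mono) (auto simp del: power_Suc)
    finally have dX: "\<bar>Xs x d (i+1) - Xs x' d' (i+1)\<bar> \<le> \<bar>x - x'\<bar>" by simp
    have dY: "\<bar>Y a (\<lambda>j. d (j + (i+1))) - Y a (\<lambda>j. d' (j + (i+1)))\<bar> \<le> a^(n - (i+1))"
      using a agree by (intro Y_diff) auto
    have "\<bar>g (P i) - g (P' i)\<bar> \<le> B * norm (P i - P' i)" using lip PM by blast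
    also have "norm (P i - P' i) \<le> \<bar>x - x'\<bar> + a^(n - (i+1))"
      unfolding Pe Pe' using norm_Pair_le[of "Xs x d (i+1) - Xs x' d' (i+1)" "Y a (\<lambda>j. d (j + (i+1))) - Y a (\<lambda>j. d' (j + (i+1)))"] dX dY
      by simp
    finally have "\<bar>g (P i) - g (P' i)\<bar> \<le> B * (\<bar>x - x'\<bar> + a^(n - (i+1)))" using B by (simp add: mult_left_mono)
    hence "\<bar>f i\<bar> \<le> b^i * (B * (\<bar>x - x'\<bar> + a^(n - (i+1))))" unfolding f_def using b0
      by (simp add: abs_mult right_diff_distrib[symmetric] mult_left_mono)
    also have "\<dots> = B * (b^i * \<bar>x - x'\<bar>) + B * (b^i * a^(n - (i+1)))" by (simp add: algebra_simps)
    also have "\<dots> \<le> B * \<bar>x - x'\<bar> + B * b^(n-1)"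
    proof (intro add_mono mult_left_mono B)
      show "b^i * \<bar>x - x'\<bar> \<le> \<bar>x - x'\<bar>" using b0 by (simp add: mult_left_le_one_le power_le_one)
      have "a^(n - (i+1)) \<le> b^(n - (i+1))" using a by (intro power_mono) auto
      hence "b^i * a^(n - (i+1)) \<le> b^i * b^(n - (i+1))" using b0 by (intro mult_left_mono) auto
      also have "\<dots> = b^(n-1)" using i by (simp add: power_add[symmetric])
      finally show "b^i * a^(n - (i+1)) \<le> b^(n-1)" .
    qed
    finally show ?thesis .
  qed
  have "\<bar>\<Sum>i<n. f i\<bar> \<le> (\<Sum>i<n. \<bar>f i\<bar>)" by (rule sum_abs)
  also have "\<dots> \<le> (\<Sum>i<n. B * \<bar>x - x'\<bar> + B * b^(n-1))" using head_term by (intro sum_mono) auto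
  also have "\<dots> = real n * (B * \<bar>x - x'\<bar> + B * b^(n-1))" by simp
  finally have head: "\<bar>\<Sum>i<n. f i\<bar> \<le> real n * (B * \<bar>x - x'\<bar> + B * b^(n-1))" .
  show ?thesis unfolding eq using head tail by linarith
qed



lemma norm4: "norm ((a, b, c, e) :: real \<times> real \<times> real \<times> real) \<le> \<bar>a\<bar> + \<bar>b\<bar> + \<bar>c\<bar> + \<bar>e\<bar>"
proof -
  have "norm (a, b, c, e) \<le> norm a + norm (b, c, e)" by (rule norm_Pair_le)
  also have "norm (b, c, e) \<le> norm b + norm (c, e)" by (rule norm_Pair_le)
  also have "norm (c, e) \<le> norm c + norm e" by (rule norm_Pair_le)
  finally show ?thesis by simp
qed

lemma grid_x:
  fixes x \<delta> :: real
  assumes "0 < \<delta>" "0 \<le> x" "x < 1"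
  shows "nat \<lfloor>x/\<delta>\<rfloor> \<in> {0..nat \<lfloor>1/\<delta>\<rfloor>}" "0 \<le> x - real (nat \<lfloor>x/\<delta>\<rfloor>) * \<delta>"
        "x - real (nat \<lfloor>x/\<delta>\<rfloor>) * \<delta> < \<delta>"
proof -
  have x0: "0 \<le> x/\<delta>" using assms by simp
  hence r: "real (nat \<lfloor>x/\<delta>\<rfloor>) = of_int \<lfloor>x/\<delta>\<rfloor>" by simp
  have "x/\<delta> \<le> 1/\<delta>" using assms by (simp add: divide_right_mono)
  hence "\<lfloor>x/\<delta>\<rfloor> \<le> \<lfloor>1/\<delta>\<rfloor>" by (rule floor_mono)
  thus "nat \<lfloor>x/\<delta>\<rfloor> \<in> {0..nat \<lfloor>1/\<delta>\<rfloor>}" by simp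
  have "of_int \<lfloor>x/\<delta>\<rfloor> \<le> x/\<delta>" "x/\<delta> < of_int \<lfloor>x/\<delta>\<rfloor> + 1" by linarith+
  hence "of_int \<lfloor>x/\<delta>\<rfloor> * \<delta> \<le> x" "x < (of_int \<lfloor>x/\<delta>\<rfloor> + 1) * \<delta>" using assms
    by (simp_all only: pos_le_divide_eq pos_divide_less_eq)
  thus "0 \<le> x - real (nat \<lfloor>x/\<delta>\<rfloor>) * \<delta>" "x - real (nat \<lfloor>x/\<delta>\<rfloor>) * \<delta> < \<delta>" unfolding r
    by (simp_all add: algebra_simps)
qed

lemma grid_v:
  fixes v E \<delta> :: real
  assumes "0 < \<delta>" "\<bar>v\<bar> \<le> E"
  shows "\<lfloor>v/\<delta>\<rfloor> \<in> {- int (nat \<lceil>E/\<delta>\<rceil> + 1)..int (nat \<lceil>E/\<delta>\<rceil> + 1)}"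
        "0 \<le> v - of_int \<lfloor>v/\<delta>\<rfloor> * \<delta>" "v - of_int \<lfloor>v/\<delta>\<rfloor> * \<delta> < \<delta>"
proof -
  have "- E \<le> v" "v \<le> E" using assms by linarith+
  hence "(- E) / \<delta> \<le> v/\<delta>" "v/\<delta> \<le> E/\<delta>" using assms by (intro divide_right_mono; simp)+
  moreover have "E/\<delta> \<ge> 0" using assms by simp
  moreover have "v/\<delta> - 1 < of_int \<lfloor>v/\<delta>\<rfloor>" "of_int \<lfloor>v/\<delta>\<rfloor> \<le> v/\<delta>" "E/\<delta> \<le> of_int \<lceil>E/\<delta>\<rceil>" by linarith+
  moreover have "(- E) / \<delta> = - (E/\<delta>)" by simp
  ultimately have "- real_of_int \<lceil>E/\<delta>\<rceil> - 2 < of_int \<lfloor>v/\<delta>\<rfloor> \<and> real_of_int \<lfloor>v/\<delta>\<rfloor> \<le> of_int \<lceil>E/\<delta>\<rceil>"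
    by (smt (verit))
  hence "real_of_int (- \<lceil>E/\<delta>\<rceil> - 2) < of_int \<lfloor>v/\<delta>\<rfloor>" "real_of_int \<lfloor>v/\<delta>\<rfloor> \<le> of_int \<lceil>E/\<delta>\<rceil>"
    by auto
  hence "- \<lceil>E/\<delta>\<rceil> - 2 < \<lfloor>v/\<delta>\<rfloor>" "\<lfloor>v/\<delta>\<rfloor> \<le> \<lceil>E/\<delta>\<rceil>" unfolding of_int_less_iff of_int_le_iff .
  moreover have "\<lceil>E/\<delta>\<rceil> \<ge> 0" using \<open>E/\<delta> \<ge> 0\<close> by simp
  ultimately show "\<lfloor>v/\<delta>\<rfloor> \<in> {- int (nat \<lceil>E/\<delta>\<rceil> + 1)..int (nat \<lceil>E/\<delta>\<rceil> + 1)}"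
    by simp
  have "of_int \<lfloor>v/\<delta>\<rfloor> \<le> v/\<delta>" "v/\<delta> < of_int \<lfloor>v/\<delta>\<rfloor> + 1" by linarith+
  hence "of_int \<lfloor>v/\<delta>\<rfloor> * \<delta> \<le> v" "v < (of_int \<lfloor>v/\<delta>\<rfloor> + 1) * \<delta>" using assms
    by (simp_all only: pos_le_divide_eq pos_divide_less_eq)
  thus "0 \<le> v - of_int \<lfloor>v/\<delta>\<rfloor> * \<delta>" "v - of_int \<lfloor>v/\<delta>\<rfloor> * \<delta> < \<delta>"
    by (simp_all add: algebra_simps)
qed



lemma cover_attr:
  fixes \<alpha> \<beta> \<delta> B G0 :: real and g :: "real \<times> real \<Rightarrow> real" and n :: nat
  assumes a: "0 < \<alpha>" "\<alpha> < \<beta>" "\<beta> < 1/2"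
    and gb: "\<And>p. p \<in> M_strip \<Longrightarrow> \<bar>g p\<bar> \<le> G0"
    and lip: "\<And>p q. p \<in> M_strip \<Longrightarrow> q \<in> M_strip \<Longrightarrow> \<bar>g p - g q\<bar> \<le> B * norm (p - q)"
    and B: "B \<ge> 0"
    and dl: "0 < \<delta>" "\<alpha>^n \<le> \<delta>" "\<delta> \<le> \<beta>^n"
  shows "\<exists>F. finite F \<and> attractor \<alpha> \<beta> g \<subseteq> (\<Union>c\<in>F. ball c (5*\<delta>)) \<and>
     real (card F) \<le> (real (nat \<lfloor>1/\<delta>\<rfloor>) + 1)^2 * 2^n * 2^n *
        (2 * real (nat \<lceil>(\<beta>^n + real n * (B*\<delta> + B*\<beta>^(n-1)) + 2*G0*\<beta>^n/(1-\<beta>))/\<delta>\<rceil> + 1) + 1)"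
proof -
  define E where "E = \<beta>^n + real n * (B*\<delta> + B*\<beta>^(n-1)) + 2*G0*\<beta>^n/(1-\<beta>)"
  define K where "K = nat \<lceil>E/\<delta>\<rceil> + 1"
  define Ix where "Ix = {0..nat \<lfloor>1/\<delta>\<rfloor>}"
  define L where "L = {xs :: bool list. set xs \<subseteq> UNIV \<and> length xs = n}"
  define Ik where "Ik = {- int K..int K}"
  define Tr where "Tr c ds = Y c (\<lambda>m. m < n \<and> ds ! m)" for c ds
  define ctr where "ctr = (\<lambda>(i::nat, ds, j::nat, es, k::int). (real i * \<delta>, Tr \<alpha> ds, real j * \<delta>,
        Tr \<beta> es + phi \<alpha> \<beta> g (real i * \<delta>) (Tr \<alpha> ds) + real_of_int k * \<delta>))"
  define F where "F = ctr ` (Ix \<times> L \<times> Ix \<times> L \<times> Ik)"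
  have finL: "finite L" unfolding L_def by (rule finite_lists_length_eq) simp
  have fin: "finite (Ix \<times> L \<times> Ix \<times> L \<times> Ik)" unfolding Ix_def Ik_def using finL by simp
  have cardL: "card L = 2^n" unfolding L_def using card_lists_length_eq[of "UNIV::bool set" n] by simp
  have cardIk: "card Ik = 2*K+1" unfolding Ik_def by simp
  have card: "real (card F) \<le> (real (nat \<lfloor>1/\<delta>\<rfloor>) + 1)^2 * 2^n * 2^n * (2 * real K + 1)"
  proof -
    have "card F \<le> card (Ix \<times> L \<times> Ix \<times> L \<times> Ik)" unfolding F_def by (rule card_image_le[OF fin])
    also have "\<dots> = (nat \<lfloor>1/\<delta>\<rfloor> + 1) * (2^n * ((nat \<lfloor>1/\<delta>\<rfloor> + 1) * (2^n * (2*K+1))))"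
      unfolding Ix_def by (simp add: card_cartesian_product cardL cardIk)
    finally have "real (card F) \<le> real ((nat \<lfloor>1/\<delta>\<rfloor> + 1) * (2^n * ((nat \<lfloor>1/\<delta>\<rfloor> + 1) * (2^n * (2*K+1)))))"
      by (simp only: of_nat_le_iff)
    thus ?thesis by (simp add: power2_eq_square algebra_simps)
  qed
  have cov: "attractor \<alpha> \<beta> g \<subseteq> (\<Union>c\<in>F. ball c (5*\<delta>))"
  proof
    fix p assume "p \<in> attractor \<alpha> \<beta> g"
    then obtain x y z w0 where q: "x \<in> {0..<1}" "y \<in> cantor \<alpha>" "z \<in> {0..<1}" "w0 \<in> cantor \<beta>"
      and p: "p = conj_h \<alpha> \<beta> g (x,y,z,w0)"
      unfolding attractor_def base_set_def by auto
    from q(2) obtain d where "y = (1 - \<alpha>) * (\<Sum>i. \<alpha> ^ i * (if d i then 1 else 0))"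
      unfolding cantor_def by blast
    hence yd: "y = Y \<alpha> d" by (simp add: Y_def ind_def)
    from q(4) obtain e where "w0 = (1 - \<beta>) * (\<Sum>i. \<beta> ^ i * (if e i then 1 else 0))"
      unfolding cantor_def by blast
    hence we: "w0 = Y \<beta> e" by (simp add: Y_def ind_def)
    have pe: "p = (x, y, z, w0 + phi \<alpha> \<beta> g x y)" unfolding p conj_h_def phi_def by simp
    define i where "i = nat \<lfloor>x/\<delta>\<rfloor>"
    define j where "j = nat \<lfloor>z/\<delta>\<rfloor>"
    define ds where "ds = map d [0..<n]"
    define es where "es = map e [0..<n]"
    have dsL: "ds \<in> L" "es \<in> L" by (simp_all add: L_def ds_def es_def)
    have agd: "\<And>m. m<n \<Longrightarrow> d m = (m < n \<and> ds ! m)" by (simp add: ds_def)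
    have age: "\<And>m. m<n \<Longrightarrow> e m = (m < n \<and> es ! m)" by (simp add: es_def)
    define xc where "xc = real i * \<delta>"
    have x01: "0 \<le> x" "x < 1" "0 \<le> z" "z < 1" using q(1,3) by auto
    have gx: "i \<in> Ix" "0 \<le> x - xc" "x - xc < \<delta>" unfolding i_def xc_def Ix_def
      by (rule grid_x[OF dl(1) x01(1,2)])+
    have gz: "j \<in> Ix" "0 \<le> z - real j * \<delta>" "z - real j * \<delta> < \<delta>" unfolding j_def Ix_def
      by (rule grid_x[OF dl(1) x01(3,4)])+
    have xc01: "0 \<le> xc" "xc < 1" using gx q dl unfolding xc_def by auto
    define v where "v = w0 + phi \<alpha> \<beta> g x y - (Tr \<beta> es + phi \<alpha> \<beta> g xc (Tr \<alpha> ds))"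
    have v1: "\<bar>w0 - Tr \<beta> es\<bar> \<le> \<beta>^n" unfolding we Tr_def by (rule Y_diff) (use a age in auto)
    have v2: "\<bar>phi \<alpha> \<beta> g x y - phi \<alpha> \<beta> g xc (Tr \<alpha> ds)\<bar>
        \<le> real n * (B*\<bar>x-xc\<bar> + B*\<beta>^(n-1)) + 2*G0*\<beta>^n/(1-\<beta>)"
      unfolding yd Tr_def by (rule phi_diff[OF _ _ _ _ gb lip B]) (use a q gx xc01 agd in auto)
    have "B*\<bar>x-xc\<bar> \<le> B*\<delta>" using gx B by (intro mult_left_mono) auto
    hence "real n * (B*\<bar>x-xc\<bar> + B*\<beta>^(n-1)) \<le> real n * (B*\<delta> + B*\<beta>^(n-1))"
      by (intro mult_left_mono) auto
    hence vE: "\<bar>v\<bar> \<le> E" unfolding v_def E_def using v1 v2 by linarith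
    define k where "k = \<lfloor>v/\<delta>\<rfloor>"
    have gk: "k \<in> Ik" "0 \<le> v - of_int k * \<delta>" "v - of_int k * \<delta> < \<delta>"
      unfolding k_def Ik_def K_def using grid_v[OF dl(1) vE] by auto
    define c where "c = ctr (i, ds, j, es, k)"
    have cF: "c \<in> F" unfolding c_def F_def using gx gz dsL gk by auto
    have yc: "\<bar>y - Tr \<alpha> ds\<bar> \<le> \<alpha>^n" unfolding yd Tr_def by (rule Y_diff) (use a agd in auto)
    have "p - c = (x - xc, y - Tr \<alpha> ds, z - real j * \<delta>, v - of_int k * \<delta>)"
      unfolding pe c_def ctr_def v_def xc_def by simp
    hence "dist p c \<le> \<bar>x - xc\<bar> + \<bar>y - Tr \<alpha> ds\<bar> + \<bar>z - real j * \<delta>\<bar> + \<bar>v - of_int k * \<delta>\<bar>"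
      using norm4 by (simp add: dist_norm)
    also have "\<dots> < 5 * \<delta>" using gx gz gk yc dl by linarith
    finally have "p \<in> ball c (5*\<delta>)" by (simp add: dist_commute)
    thus "p \<in> (\<Union>c\<in>F. ball c (5*\<delta>))" using cF by blast
  qed
  show ?thesis using fin F_def cov card unfolding K_def E_def by blast
qed



lemma count_bound:
  fixes \<delta> \<beta> B G0 :: real
  assumes d: "0 < \<delta>" "\<delta> \<le> 1" "\<delta> \<le> \<beta>^n" and b: "0 < \<beta>" "\<beta> < 1/2" and B: "B \<ge> 0" and G0: "G0 \<ge> 0"
  shows "(real (nat \<lfloor>1/\<delta>\<rfloor>) + 1)^2 * 2^n * 2^n *
        (2 * real (nat \<lceil>(\<beta>^n + real n * (B*\<delta> + B*\<beta>^(n-1)) + 2*G0*\<beta>^n/(1-\<beta>))/\<delta>\<rceil> + 1) + 1)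
     \<le> 4 * (2 * (1 + B + B/\<beta> + 2*G0/(1-\<beta>)) + 5) * (real n + 1) * (4^n * \<beta>^n / \<delta>^3)"
proof -
  define t where "t = \<beta>^n"
  define E where "E = \<beta>^n + real n * (B*\<delta> + B*\<beta>^(n-1)) + 2*G0*\<beta>^n/(1-\<beta>)"
  define Q where "Q = 1 + B + B/\<beta> + 2*G0/(1-\<beta>)"
  have t: "t > 0" "\<delta> \<le> t" unfolding t_def using b d by auto
  have Q0: "Q \<ge> 1" unfolding Q_def using B G0 b by auto
  have "0 \<le> \<lfloor>1/\<delta>\<rfloor>" using d by simp
  hence "real (nat \<lfloor>1/\<delta>\<rfloor>) = of_int \<lfloor>1/\<delta>\<rfloor>" by simp
  hence "real (nat \<lfloor>1/\<delta>\<rfloor>) \<le> 1/\<delta>" by linarith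
  moreover have "1 \<le> 1/\<delta>" using d by simp
  ultimately have "real (nat \<lfloor>1/\<delta>\<rfloor>) + 1 \<le> 2/\<delta>" by simp
  hence A: "(real (nat \<lfloor>1/\<delta>\<rfloor>) + 1)^2 \<le> 4/\<delta>^2"
    using power_mono[of "real (nat \<lfloor>1/\<delta>\<rfloor>) + 1" "2/\<delta>" 2] by (simp add: power_divide)
  have h3: "real n * \<beta>^(n-1) \<le> real n * t / \<beta>"
    unfolding t_def using b by (cases n) auto
  have e1: "real n * (B*\<delta>) \<le> real n * (B*t)" using t B by (intro mult_left_mono) auto
  have e2: "real n * (B*\<beta>^(n-1)) \<le> B * (real n * t / \<beta>)" using h3 B
    by (metis mult.left_commute mult_left_mono)
  have "E \<le> t + real n * (B*t) + B * (real n * t / \<beta>) + 2*G0*t/(1-\<beta>)"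
    unfolding E_def t_def[symmetric] using e1 e2 by (simp add: distrib_left)
  also have "\<dots> \<le> (real n + 1) * t + (real n + 1) * (B*t) + (real n + 1) * (B*t/\<beta>) + (real n + 1) * (2*G0*t/(1-\<beta>))"
  proof -
    have f: "0 \<le> B*t" "0 \<le> B*t/\<beta>" "0 \<le> 2*G0*t/(1-\<beta>)" using B t b G0 by auto
    have f2: "0 \<le> real n * t" "0 \<le> real n * (2*G0*t/(1-\<beta>))" using f t by (auto intro!: mult_nonneg_nonneg simp del: times_divide_eq_right)
    have eq: "B * (real n * t / \<beta>) = real n * (B*t/\<beta>)" by simp
    show ?thesis unfolding eq distrib_right mult_1 using f f2 t by linarith
  qed
  also have "\<dots> = (real n + 1) * t * Q" unfolding Q_def by (simp add: algebra_simps add_divide_distrib)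
  finally have EQ: "E \<le> (real n + 1) * t * Q" .
  have E0: "E \<ge> 0" unfolding E_def using B G0 b d by auto
  have "0 \<le> E/\<delta>" using E0 d by simp
  hence "0 \<le> \<lceil>E/\<delta>\<rceil>" by simp
  hence "real (nat \<lceil>E/\<delta>\<rceil>) = of_int \<lceil>E/\<delta>\<rceil>" by simp
  hence "real (nat \<lceil>E/\<delta>\<rceil>) \<le> E/\<delta> + 1" by linarith
  hence "2 * real (nat \<lceil>E/\<delta>\<rceil> + 1) + 1 \<le> 2 * (E/\<delta>) + 5" by simp
  also have "E/\<delta> \<le> (real n + 1) * Q * (t/\<delta>)" using EQ d by (simp add: divide_right_mono field_simps)
  hence "2 * (E/\<delta>) + 5 \<le> 2 * ((real n + 1) * Q * (t/\<delta>)) + 5" by simp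
  also have "\<dots> \<le> (2*Q+5) * (real n + 1) * (t/\<delta>)"
  proof -
    have "1 \<le> t/\<delta>" using t d by simp
    hence "1 * 1 \<le> (real n + 1) * (t/\<delta>)" by (intro mult_mono) auto
    moreover have "(2*Q+5) * (real n + 1) * (t/\<delta>) = 2 * ((real n + 1) * Q * (t/\<delta>)) + 5 * ((real n + 1) * (t/\<delta>))"
      by (simp add: algebra_simps)
    ultimately show ?thesis by linarith
  qed
  finally have Kt: "2 * real (nat \<lceil>E/\<delta>\<rceil> + 1) + 1 \<le> (2*Q+5) * (real n + 1) * (t/\<delta>)" .
  have "(real (nat \<lfloor>1/\<delta>\<rfloor>) + 1)^2 * 2^n * 2^n * (2 * real (nat \<lceil>E/\<delta>\<rceil> + 1) + 1)
        \<le> (4/\<delta>^2) * 2^n * 2^n * ((2*Q+5) * (real n + 1) * (t/\<delta>))"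
    using A Kt by (intro mult_mono) auto
  also have "\<dots> = 4 * (2*Q+5) * (real n + 1) * (4^n * t / \<delta>^3)"
    using d by (simp add: field_simps power2_eq_square power3_eq_cube flip: power_mult_distrib)
  finally show ?thesis unfolding E_def Q_def t_def .
qed


lemma in_strip_shift:
  fixes x c :: real
  assumes "0 \<le> x" "x \<le> 1" "0 < c" "c < 1"
  shows "0 < x + c * (1/2 - x) \<and> x + c * (1/2 - x) < 1"
proof -
  have eq: "x + c * (1/2 - x) = (1 - c) * x + c/2" by (simp add: algebra_simps)
  have "0 \<le> (1 - c) * x" using assms by simp
  moreover have "(1 - c) * x \<le> 1 - c" using mult_left_mono[of x 1 "1 - c"] assms by simp
  ultimately show ?thesis unfolding eq using assms by linarith
qed

lemma Cb1_lip:
  assumes "g \<in> Cb1"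
  shows "\<exists>B\<ge>0. \<forall>p\<in>M_strip. \<forall>q\<in>M_strip. \<bar>g p - g q\<bar> \<le> B * norm (p - q)"
proof -
  define U :: "(real \<times> real) set" where "U = {0<..<1} \<times> UNIV"
  define D :: "(real \<times> real) set" where "D = {0..1} \<times> UNIV"
  obtain g' :: "real \<times> real \<Rightarrow> (real \<times> real) \<Rightarrow>\<^sub>L real" where
    gd: "\<And>p. p \<in> U \<Longrightarrow> (g has_derivative blinfun_apply (g' p)) (at p)"
    and gbd: "bounded (g' ` U)"
    using assms unfolding Cb1_def U_def by blast
  obtain G where Gc: "continuous_on D G" and GE: "\<And>p. p \<in> M_strip \<Longrightarrow> G p = g p"
    using assms unfolding Cb1_def D_def by blast
  obtain B0 where B0: "\<And>p. p \<in> U \<Longrightarrow> norm (g' p) \<le> B0"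
    using gbd unfolding bounded_iff by blast
  define B where "B = max B0 0"
  have B: "B \<ge> 0" "\<And>p. p \<in> U \<Longrightarrow> onorm (blinfun_apply (g' p)) \<le> B"
    using B0 unfolding B_def by (auto simp: norm_blinfun.rep_eq[symmetric] intro: le_max_iff_disj[THEN iffD2])
  have UM: "U \<subseteq> M_strip" "M_strip \<subseteq> D" unfolding U_def M_strip_def D_def by auto
  have convU: "convex U" unfolding U_def by (intro convex_Times) auto
  have lipU: "norm (g p - g q) \<le> B * norm (p - q)" if "p \<in> U" "q \<in> U" for p q
    by (rule differentiable_bound[OF convU _ B(2) that]) (auto intro: has_derivative_at_withinI gd)
  have lipD: "\<bar>G p - G q\<bar> \<le> B * norm (p - q)" if p: "p \<in> D" and q: "q \<in> D" for p q
  proof -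
    define c where "c k = 1 / (real k + 2)" for k :: nat
    have c: "0 < c k" "c k < 1" for k unfolding c_def by auto
    have c0: "c \<longlonglongrightarrow> 0" unfolding c_def by real_asymp
    define s where "s k = p + c k *\<^sub>R ((1/2, 0) - p)" for k
    define t where "t k = q + c k *\<^sub>R ((1/2, 0) - q)" for k
    have sU: "s k \<in> U" "t k \<in> U" for k
      using in_strip_shift[of "fst p" "c k"] in_strip_shift[of "fst q" "c k"] p q c[of k]
      unfolding s_def t_def U_def D_def by (auto simp: algebra_simps)
    have sl: "s \<longlonglongrightarrow> p" unfolding s_def
      using tendsto_add[OF tendsto_const tendsto_scaleR[OF c0 tendsto_const], of p "(1/2,0) - p"] by simp
    have tl: "t \<longlonglongrightarrow> q" unfolding t_def
      using tendsto_add[OF tendsto_const tendsto_scaleR[OF c0 tendsto_const], of q "(1/2,0) - q"] by simp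
    have Gs: "(\<lambda>k. G (s k)) \<longlonglongrightarrow> G p"
      by (rule continuous_on_tendsto_compose[OF Gc sl p], rule always_eventually) (use sU UM in blast)
    have Gt: "(\<lambda>k. G (t k)) \<longlonglongrightarrow> G q"
      by (rule continuous_on_tendsto_compose[OF Gc tl q], rule always_eventually) (use sU UM in blast)
    have l1: "(\<lambda>k. \<bar>G (s k) - G (t k)\<bar>) \<longlonglongrightarrow> \<bar>G p - G q\<bar>"
      by (intro tendsto_intros Gs Gt)
    have l2: "(\<lambda>k. B * norm (s k - t k)) \<longlonglongrightarrow> B * norm (p - q)"
      by (intro tendsto_intros sl tl)
    have "\<bar>G (s k) - G (t k)\<bar> \<le> B * norm (s k - t k)" for k
      using lipU[OF sU(1) sU(2)] GE UM sU by (metis real_norm_def subsetD)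
    thus ?thesis by (intro tendsto_le[OF _ l2 l1]) auto
  qed
  show ?thesis
  proof (intro exI[of _ B] conjI ballI B(1))
    fix p q assume "p \<in> M_strip" "q \<in> M_strip"
    thus "\<bar>g p - g q\<bar> \<le> B * norm (p - q)" using lipD GE UM by (metis subsetD)
  qed
qed

lemma Cb1_bd:
  assumes "g \<in> Cb1"
  shows "\<exists>G0\<ge>0. \<forall>p\<in>M_strip. \<bar>g p\<bar> \<le> G0"
proof -
  obtain G0 where "\<forall>x\<in>g ` M_strip. norm x \<le> G0" using assms unfolding Cb1_def bounded_iff by blast
  moreover have "(0, 0) \<in> M_strip" unfolding M_strip_def by simp
  ultimately show ?thesis by (intro exI[of _ G0]) force
qed

lemma DL_alg1: "lb < 0 \<Longrightarrow> (2*l2 - 2*lb)/(-lb) = 2 - 2*l2/(lb::real)" by (simp add: field_simps)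
lemma DL_alg2: "la < 0 \<Longrightarrow> (2*l2 + lb - 3*la)/(-la) = 3 - 2*l2/la - lb/(la::real)" by (simp add: field_simps)

theorem proposition3p10:
  fixes \<alpha> \<beta> :: real and g :: "real \<times> real \<Rightarrow> real"
  assumes "0 < \<alpha>" "\<alpha> < \<beta>" "\<beta> < 1/2"
    and "g \<in> Cb1"
  shows "upper_box_dim (attractor \<alpha> \<beta> g) \<le> ereal (D_L \<alpha> \<beta>)"
proof -
  note a = assms(1-3)
  obtain B where B: "B \<ge> 0" "\<And>p q. p \<in> M_strip \<Longrightarrow> q \<in> M_strip \<Longrightarrow> \<bar>g p - g q\<bar> \<le> B * norm (p - q)"
    using Cb1_lip[OF assms(4)] by blast
  obtain G0 where G0: "G0 \<ge> 0" "\<And>p. p \<in> M_strip \<Longrightarrow> \<bar>g p\<bar> \<le> G0"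
    using Cb1_bd[OF assms(4)] by blast
  define K where "K = 4 * (2 * (1 + B + B/\<beta> + 2*G0/(1-\<beta>)) + 5)"
  have K: "K \<ge> 1" unfolding K_def using B G0 a by auto
  have b01: "0 < \<beta>" "\<beta> < 1" using a by auto
  have gen: "\<exists>F. finite F \<and> attractor \<alpha> \<beta> g \<subseteq> (\<Union>c\<in>F. ball c (5*\<delta>)) \<and>
      real (card F) \<le> K * (real n + 1) * (4^n * \<beta>^n / \<delta>^3)"
    if d: "0 < \<delta>" "\<alpha>^n \<le> \<delta>" "\<delta> \<le> \<beta>^n" for \<delta> :: real and n :: nat
  proof -
    have d1: "\<delta> \<le> 1" using d(3) b01 by (meson order.trans less_imp_le power_le_one)
    obtain F where F: "finite F" "attractor \<alpha> \<beta> g \<subseteq> (\<Union>c\<in>F. ball c (5*\<delta>))"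
      "real (card F) \<le> (real (nat \<lfloor>1/\<delta>\<rfloor>) + 1)^2 * 2^n * 2^n *
        (2 * real (nat \<lceil>(\<beta>^n + real n * (B*\<delta> + B*\<beta>^(n-1)) + 2*G0*\<beta>^n/(1-\<beta>))/\<delta>\<rceil> + 1) + 1)"
      using cover_attr[OF a G0(2) B(2) B(1) d] by blast
    have "real (card F) \<le> K * (real n + 1) * (4^n * \<beta>^n / \<delta>^3)"
      using F(3) count_bound[OF d(1) d1 d(3) b01(1) a(3) B(1) G0(1)] unfolding K_def by linarith
    thus ?thesis using F(1,2) by blast
  qed
  show ?thesis
  proof (cases "\<beta> \<le> 1/4")
    case True
    have "upper_box_dim (attractor \<alpha> \<beta> g) \<le> ereal (ln (4/\<beta>^2) / - ln \<beta>)"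
    proof (rule dim_bound[OF b01 _ K])
      show "(5::real) > 0" by simp
      have "\<beta>^2 \<le> 1" using b01 by (simp add: power_le_one)
      thus "1 \<le> 4/\<beta>^2" using b01 by (simp add: field_simps)
      fix n :: nat
      have "\<alpha>^n \<le> \<beta>^n" using a by (intro power_mono) auto
      then obtain F where F: "finite F" "attractor \<alpha> \<beta> g \<subseteq> (\<Union>c\<in>F. ball c (5*\<beta>^n))"
        "real (card F) \<le> K * (real n + 1) * (4^n * \<beta>^n / (\<beta>^n)^3)"
        using gen[of "\<beta>^n" n] b01 by auto
      have "(4/\<beta>^2)^n = 4^n / (\<beta>^n)^2" by (simp add: power_divide flip: power_mult) (simp add: power_mult mult.commute flip: power_mult)
      moreover have "(4::real)^n * \<beta>^n / (\<beta>^n)^3 = 4^n / (\<beta>^n)^2" using b01 by (simp add: power3_eq_cube power2_eq_square)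
      ultimately have "4^n * \<beta>^n / (\<beta>^n)^3 = (4/\<beta>^2)^n" by simp
      thus "\<exists>F. finite F \<and> attractor \<alpha> \<beta> g \<subseteq> (\<Union>x\<in>F. ball x (5 * \<beta>^n)) \<and> real (card F) \<le> K * (real n + 1) * (4/\<beta>^2)^n"
        using F by auto
    qed
    also have "ln (4/\<beta>^2) / - ln \<beta> = D_L \<alpha> \<beta>"
    proof -
      have hL: "ln (4/\<beta>^2) = 2 * ln 2 - 2 * ln \<beta>" using b01
        by (simp add: ln_div ln_realpow flip: ln_realpow[of 2 2, simplified])
      have ln0: "ln \<beta> < 0" using b01 by simp
      have hD: "D_L \<alpha> \<beta> = 2 - 2 * ln 2 / ln \<beta>" unfolding D_L_def using True by simp
      show ?thesis by (simp only: hL hD DL_alg1[OF ln0])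
    qed
    finally show ?thesis .
  next
    case False
    have a01: "0 < \<alpha>" "\<alpha> < 1" using a by auto
    have "upper_box_dim (attractor \<alpha> \<beta> g) \<le> ereal (ln (4*\<beta>/\<alpha>^3) / - ln \<alpha>)"
    proof (rule dim_bound[OF a01 _ K])
      show "(5::real) > 0" by simp
      have "\<alpha>^3 \<le> \<alpha>" using a01 by (simp add: power3_eq_cube mult_le_one)
      also have "\<alpha> \<le> 4*\<beta>" using a by simp
      finally show "1 \<le> 4*\<beta>/\<alpha>^3" using a01 by simp
      fix n :: nat
      have "\<alpha>^n \<le> \<beta>^n" using a by (intro power_mono) auto
      then obtain F where F: "finite F" "attractor \<alpha> \<beta> g \<subseteq> (\<Union>c\<in>F. ball c (5*\<alpha>^n))"
        "real (card F) \<le> K * (real n + 1) * (4^n * \<beta>^n / (\<alpha>^n)^3)"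
        using gen[of "\<alpha>^n" n] a01 by auto
      have "4^n * \<beta>^n / (\<alpha>^n)^3 = (4*\<beta>/\<alpha>^3)^n"
        by (simp add: power_divide power_mult_distrib flip: power_mult) (simp add: mult.commute)
      thus "\<exists>F. finite F \<and> attractor \<alpha> \<beta> g \<subseteq> (\<Union>x\<in>F. ball x (5 * \<alpha>^n)) \<and> real (card F) \<le> K * (real n + 1) * (4*\<beta>/\<alpha>^3)^n"
        using F by auto
    qed
    also have "ln (4*\<beta>/\<alpha>^3) / - ln \<alpha> = D_L \<alpha> \<beta>"
    proof -
      have hL: "ln (4*\<beta>/\<alpha>^3) = 2 * ln 2 + ln \<beta> - 3 * ln \<alpha>" using a01 b01
        by (simp add: ln_div ln_mult ln_realpow flip: ln_realpow[of 2 2, simplified])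
      have ln0: "ln \<alpha> < 0" using a01 by simp
      have hD: "D_L \<alpha> \<beta> = 3 - 2 * ln 2 / ln \<alpha> - ln \<beta> / ln \<alpha>" unfolding D_L_def using False by simp
      show ?thesis by (simp only: hL hD DL_alg2[OF ln0])
    qed
    finally show ?thesis .
  qed
qed


end
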